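(* Let $p$ be an odd prime, $n\geq1$, and let $G$ be a finitely generated, virtually free, para-$C_p^{*n}$ group. Let $\mathcal{G}$ be a graph of groups with $\pi_1(\mathcal{G})\cong G$ whose underlying graph is a finite tree with $k$ vertices, whose vertex groups are finite direct products of copies of $C_p$, in which every edge group is a proper subgroup of each of the two vertex groups it joins, and whose vertex groups $V_1,\dots,V_k$ and edge groups $E_1,\dots,E_{k-1}$ satisfy $\frac{|V_1|}{|E_1|}\cdots\frac{|V_{k-1}|}{|E_{k-1}|}\cdot|V_k| = p^n$ (for any enumeration). If $k\geq n$, then $k=n$ and $G\cong C_p^{*n}$.
   Context: $C_p^{*n}$ is the free product of $n$ copies of the cyclic group $C_p$ of order $p$. A group $G$ is para-$C_p^{*n}$ if it is residually nilpotent and $G/\gamma_k(G)\cong C_p^{*n}/\gamma_k(C_p^{*n})$ for all $k\ge1$, where $\gamma_1(G)=G$, $\gamma_k(G)=[G,\gamma_{k-1}(G)]$. A graph of groups over a tree assigns groups to vertices and edges with monomorphisms from each edge group into the adjacent vertex groups; its fundamental group is the iterated amalgamated free product. *)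

theory Defs
  imports "HOL-Algebra.Algebra"
begin

definition comm_subgroup :: "('a, 'b) monoid_scheme \<Rightarrow> 'a set \<Rightarrow> 'a set \<Rightarrow> 'a set"
  where "comm_subgroup G A B =
     generate G {x \<otimes>\<^bsub>G\<^esub> y \<otimes>\<^bsub>G\<^esub> inv\<^bsub>G\<^esub> x \<otimes>\<^bsub>G\<^esub> inv\<^bsub>G\<^esub> y | x y. x \<in> A \<and> y \<in> B}"

text \<open>lcs G 0 = gamma_1(G) = G, lcs G (Suc k) = [G, lcs G k]; so gamma_k(G) = lcs G (k - 1).\<close>
primrec lcs :: "('a, 'b) monoid_scheme \<Rightarrow> nat \<Rightarrow> 'a set" where
  "lcs G 0 = carrier G"
| "lcs G (Suc k) = comm_subgroup G (carrier G) (lcs G k)"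

definition gamma :: "('a, 'b) monoid_scheme \<Rightarrow> nat \<Rightarrow> 'a set"
  where "gamma G k = lcs G (k - 1)"

definition residually_nilpotent :: "('a, 'b) monoid_scheme \<Rightarrow> bool"
  where "residually_nilpotent G \<longleftrightarrow> (\<Inter>k\<in>{1..}. gamma G k) = {\<one>\<^bsub>G\<^esub>}"

text \<open>Elements are reduced words: lists of (i, a) meaning x_i^a with i < n, 0 < a < p,
  consecutive letters from different factors.\<close>

fun cp_push :: "nat \<Rightarrow> nat \<times> nat \<Rightarrow> (nat \<times> nat) list \<Rightarrow> (nat \<times> nat) list" where
  "cp_push p (i, a) [] = [(i, a)]"
| "cp_push p (i, a) ((j, b) # ws) =
     (if i = j then (if (a + b) mod p = 0 then ws else (i, (a + b) mod p) # ws)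
      else (i, a) # (j, b) # ws)"

definition Cp_free_prod :: "nat \<Rightarrow> nat \<Rightarrow> (nat \<times> nat) list monoid" where
  "Cp_free_prod p n =
     \<lparr> carrier = {ws. (\<forall>(i, a) \<in> set ws. i < n \<and> 0 < a \<and> a < p) \<and>
                      (\<forall>j. Suc j < length ws \<longrightarrow> fst (ws ! j) \<noteq> fst (ws ! Suc j))},
       monoid.mult = (\<lambda>xs ys. foldr (cp_push p) xs ys),
       one = [] \<rparr>"

definition para_Cp_free :: "nat \<Rightarrow> nat \<Rightarrow> ('a, 'b) monoid_scheme \<Rightarrow> bool" where
  "para_Cp_free p n G \<longleftrightarrow> residually_nilpotent G \<and>
     (\<forall>k\<ge>1. G Mod (gamma G k) \<cong> (Cp_free_prod p n) Mod (gamma (Cp_free_prod p n) k))"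

definition finitely_generated :: "('a, 'b) monoid_scheme \<Rightarrow> bool" where
  "finitely_generated G \<longleftrightarrow> (\<exists>S. finite S \<and> S \<subseteq> carrier G \<and> generate G S = carrier G)"

definition word_eval :: "('a, 'b) monoid_scheme \<Rightarrow> ('a \<times> bool) list \<Rightarrow> 'a" where
  "word_eval G ws = foldr (\<lambda>(x, b) acc. (if b then x else inv\<^bsub>G\<^esub> x) \<otimes>\<^bsub>G\<^esub> acc) ws \<one>\<^bsub>G\<^esub>"

definition reduced_word :: "('a \<times> bool) list \<Rightarrow> bool" where
  "reduced_word ws \<longleftrightarrow> (\<forall>j. Suc j < length ws \<longrightarrow>
      \<not> (fst (ws ! j) = fst (ws ! Suc j) \<and> snd (ws ! j) \<noteq> snd (ws ! Suc j)))"

definition freely_generates :: "('a, 'b) monoid_scheme \<Rightarrow> 'a set \<Rightarrow> 'a set \<Rightarrow> bool" where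
  "freely_generates G B F \<longleftrightarrow> B \<subseteq> F \<and> generate G B = F \<and>
     (\<forall>ws. ws \<noteq> [] \<and> fst ` set ws \<subseteq> B \<and> reduced_word ws \<longrightarrow> word_eval G ws \<noteq> \<one>\<^bsub>G\<^esub>)"

definition virtually_free :: "('a, 'b) monoid_scheme \<Rightarrow> bool" where
  "virtually_free G \<longleftrightarrow> (\<exists>F B. subgroup F G \<and> finite (rcosets\<^bsub>G\<^esub> F) \<and> freely_generates G B F)"

text \<open>Vertices 0..<k, edges 0..<k-1, edge e joins src e and tgt e. A connected graph with
  k vertices and k - 1 edges is a tree.\<close>
definition tree_graph :: "nat \<Rightarrow> (nat \<Rightarrow> nat) \<Rightarrow> (nat \<Rightarrow> nat) \<Rightarrow> bool" where
  "tree_graph k src tgt \<longleftrightarrow> 1 \<le> k \<and>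
     (\<forall>e < k - 1. src e < k \<and> tgt e < k \<and> src e \<noteq> tgt e) \<and>
     (\<forall>v < k. (0, v) \<in> ({(src e, tgt e) | e. e < k - 1} \<union> {(tgt e, src e) | e. e < k - 1})\<^sup>*)"

definition graph_of_groups ::
  "nat \<Rightarrow> (nat \<Rightarrow> nat) \<Rightarrow> (nat \<Rightarrow> nat) \<Rightarrow> (nat \<Rightarrow> 'b monoid) \<Rightarrow> (nat \<Rightarrow> 'b monoid)
   \<Rightarrow> (nat \<Rightarrow> 'b \<Rightarrow> 'b) \<Rightarrow> (nat \<Rightarrow> 'b \<Rightarrow> 'b) \<Rightarrow> bool" where
  "graph_of_groups k src tgt V E \<alpha> \<beta> \<longleftrightarrow> tree_graph k src tgt \<and>
     (\<forall>v < k. group (V v)) \<and>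
     (\<forall>e < k - 1. group (E e) \<and>
        \<alpha> e \<in> hom (E e) (V (src e)) \<and> inj_on (\<alpha> e) (carrier (E e)) \<and>
        \<beta> e \<in> hom (E e) (V (tgt e)) \<and> inj_on (\<beta> e) (carrier (E e)))"

definition cocone ::
  "nat \<Rightarrow> (nat \<Rightarrow> nat) \<Rightarrow> (nat \<Rightarrow> nat) \<Rightarrow> (nat \<Rightarrow> 'b monoid) \<Rightarrow> (nat \<Rightarrow> 'b monoid)
   \<Rightarrow> (nat \<Rightarrow> 'b \<Rightarrow> 'b) \<Rightarrow> (nat \<Rightarrow> 'b \<Rightarrow> 'b) \<Rightarrow> ('c, 'd) monoid_scheme \<Rightarrow> (nat \<Rightarrow> 'b \<Rightarrow> 'c) \<Rightarrow> bool" where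
  "cocone k src tgt V E \<alpha> \<beta> T \<phi> \<longleftrightarrow>
     (\<forall>v < k. \<phi> v \<in> hom (V v) T) \<and>
     (\<forall>e < k - 1. \<forall>x \<in> carrier (E e). \<phi> (src e) (\<alpha> e x) = \<phi> (tgt e) (\<beta> e x))"

text \<open>G (with maps phi) is the fundamental group of the tree of groups, i.e. the iterated
  amalgamated free product, characterised by its universal property (colimit of the diagram).
  Test groups range over groups carried by nat; since all groups involved are countable this
  is equivalent to the universal property against all groups.\<close>
definition is_fundamental_group ::
  "nat \<Rightarrow> (nat \<Rightarrow> nat) \<Rightarrow> (nat \<Rightarrow> nat) \<Rightarrow> (nat \<Rightarrow> 'b monoid) \<Rightarrow> (nat \<Rightarrow> 'b monoid)
   \<Rightarrow> (nat \<Rightarrow> 'b \<Rightarrow> 'b) \<Rightarrow> (nat \<Rightarrow> 'b \<Rightarrow> 'b) \<Rightarrow> ('a, 'x) monoid_scheme \<Rightarrow> (nat \<Rightarrow> 'b \<Rightarrow> 'a) \<Rightarrow> bool" where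
  "is_fundamental_group k src tgt V E \<alpha> \<beta> G \<phi> \<longleftrightarrow>
     cocone k src tgt V E \<alpha> \<beta> G \<phi> \<and>
     (\<forall>(T :: nat monoid) \<psi>. group T \<and> cocone k src tgt V E \<alpha> \<beta> T \<psi> \<longrightarrow>
        (\<exists>f. f \<in> hom G T \<and> (\<forall>v < k. \<forall>x \<in> carrier (V v). f (\<phi> v x) = \<psi> v x)) \<and>
        (\<forall>f g. f \<in> hom G T \<and> (\<forall>v < k. \<forall>x \<in> carrier (V v). f (\<phi> v x) = \<psi> v x) \<and>
               g \<in> hom G T \<and> (\<forall>v < k. \<forall>x \<in> carrier (V v). g (\<phi> v x) = \<psi> v x) \<longrightarrow>
               (\<forall>y \<in> carrier G. f y = g y)))"

end

theory Submission
  imports Defs "HOL-Library.Countable_Set" "HOL-Computational_Algebra.Primes"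
begin



fun rw :: "nat \<Rightarrow> nat \<Rightarrow> (nat \<times> nat) list \<Rightarrow> bool" where
  "rw p n [] = True"
| "rw p n [(i,a)] = (i < n \<and> 0 < a \<and> a < p)"
| "rw p n ((i,a)#(j,b)#ws) = (i < n \<and> 0 < a \<and> a < p \<and> i \<noteq> j \<and> rw p n ((j,b)#ws))"

lemma rw_iff: "rw p n ws \<longleftrightarrow> (\<forall>(i, a) \<in> set ws. i < n \<and> 0 < a \<and> a < p) \<and>
                      (\<forall>j. Suc j < length ws \<longrightarrow> fst (ws ! j) \<noteq> fst (ws ! Suc j))"
proof (induction p n ws rule: rw.induct)
  case (3 p n i a j b ws)
  have e: "(\<forall>m. Suc m < length ((i,a)#(j,b)#ws) \<longrightarrow> fst (((i,a)#(j,b)#ws) ! m) \<noteq> fst (((i,a)#(j,b)#ws) ! Suc m))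
    \<longleftrightarrow> i \<noteq> j \<and> (\<forall>m. Suc m < length ((j,b)#ws) \<longrightarrow> fst (((j,b)#ws) ! m) \<noteq> fst (((j,b)#ws) ! Suc m))"
    (is "?L \<longleftrightarrow> ?R")
  proof
    assume ?L
    then show ?R by (metis Suc_less_eq length_Cons nth_Cons_Suc nth_Cons_0 fst_conv zero_less_Suc)
  next
    assume R: ?R
    show ?L
    proof (intro allI impI)
      fix m assume "Suc m < length ((i,a)#(j,b)#ws)"
      then show "fst (((i,a)#(j,b)#ws) ! m) \<noteq> fst (((i,a)#(j,b)#ws) ! Suc m)"
        using R by (cases m) auto
    qed
  qed
  show ?case unfolding e using 3 by auto
qed auto

lemma carrier_P: "carrier (Cp_free_prod p n) = {ws. rw p n ws}"
  unfolding Cp_free_prod_def using rw_iff by auto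

lemma mult_P: "x \<otimes>\<^bsub>Cp_free_prod p n\<^esub> y = foldr (cp_push p) x y"
  by (simp add: Cp_free_prod_def)
lemma one_P: "\<one>\<^bsub>Cp_free_prod p n\<^esub> = []"
  by (simp add: Cp_free_prod_def)

lemma rw_tl: "rw p n (x#ws) \<Longrightarrow> rw p n ws"
  by (cases x; cases ws) auto

lemma rw_push: assumes "rw p n ws" "i < n" "0 < a" "a < p" shows "rw p n (cp_push p (i,a) ws)"
proof (cases ws)
  case Nil then show ?thesis using assms by simp
next
  case (Cons y ws')
  obtain j b where y: "y = (j,b)" by force
  show ?thesis
  proof (cases "i = j")
    case True
    have "rw p n ws'" using assms(1) Cons rw_tl by blast
    moreover have "rw p n ((i, (a+b) mod p) # ws')" if "(a+b) mod p \<noteq> 0"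
      using assms that Cons y True by (cases ws') (auto simp: mod_less_divisor)
    ultimately show ?thesis using Cons y True by auto
  next
    case False then show ?thesis using assms Cons y by auto
  qed
qed

lemma rw_foldr: "rw p n ys \<Longrightarrow> rw p n xs \<Longrightarrow> rw p n (foldr (cp_push p) xs ys)"
proof (induction xs)
  case (Cons x xs)
  obtain i a where x: "x = (i,a)" by force
  have "rw p n xs" using Cons rw_tl by blast
  moreover have "i < n" "0 < a" "a < p" using Cons.prems x by (cases xs; auto)+
  ultimately show ?case using Cons x rw_push by simp
qed simp

lemma push_push:
  assumes "rw p n w" "0 < a" "a < p" "0 < b" "b < p"
  shows "cp_push p (i,a) (cp_push p (i,b) w) =
         (if (a+b) mod p = 0 then w else cp_push p (i,(a+b) mod p) w)"
proof (cases w)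
  case Nil then show ?thesis by simp
next
  case (Cons y w')
  obtain j c where y: "y = (j,c)" by force
  have c: "0 < c" "c < p" using assms(1) Cons y by (cases w'; auto)+
  show ?thesis
  proof (cases "j = i")
    case False then show ?thesis using Cons y by simp
  next
    case True
    have hd: "cp_push p (i,a) w' = (i,a) # w'"
      using assms(1) Cons y True by (cases w') auto
    have m: "(x + y mod p) mod p = (x + y) mod p" for x y :: nat by (simp add: mod_add_right_eq)
    have m2: "(x mod p + y) mod p = (x + y) mod p" for x y :: nat by (simp add: mod_add_left_eq)
    have am: "a mod p = a" "c mod p = c" using assms c by auto
    show ?thesis
    proof (cases "(b + c) mod p = 0")
      case bc: True
      have "a mod p = (a + (b + c)) mod p" using m[of a "b + c"] bc by simp
      show ?thesis
      proof (cases "(a+b) mod p = 0")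
        case True
        have "c mod p = ((a + b) + c) mod p" using m2[of "a+b" c] True by simp
        then have "a = c" using \<open>a mod p = (a + (b + c)) mod p\<close> am by (simp add: add.assoc)
        then show ?thesis using Cons y \<open>j = i\<close> bc True hd by simp
      next
        case False
        have "((a+b) mod p + c) mod p = a" using m2[of "a+b" c] \<open>a mod p = (a + (b + c)) mod p\<close> am
          by (simp add: add.assoc)
        then show ?thesis using Cons y \<open>j = i\<close> bc False hd assms by simp
      qed
    next
      case bc: False
      have e: "(a + (b + c) mod p) mod p = ((a+b) mod p + c) mod p"
        using m m2 by (simp add: add.assoc)
      show ?thesis
      proof (cases "(a+b) mod p = 0")
        case True
        have "(a + (b + c) mod p) mod p = c" using e True am by simp
        then show ?thesis using Cons y \<open>j = i\<close> bc True c by simp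
      next
        case False
        then show ?thesis using Cons y \<open>j = i\<close> bc e by simp
      qed
    qed
  qed
qed




lemma push_foldr:
  assumes "rw p n ys" "rw p n zs" "i < n" "0 < a" "a < p"
  shows "foldr (cp_push p) (cp_push p (i,a) ys) zs = cp_push p (i,a) (foldr (cp_push p) ys zs)"
proof (cases ys)
  case Nil then show ?thesis by simp
next
  case (Cons y ys')
  obtain j b where y: "y = (j,b)" by force
  have b: "j < n" "0 < b" "b < p" using assms(1) Cons y by (cases ys'; auto)+
  have ys': "rw p n ys'" using assms(1) Cons rw_tl by blast
  have W: "rw p n (foldr (cp_push p) ys' zs)" using rw_foldr[OF assms(2) ys'] .
  show ?thesis
  proof (cases "i = j")
    case False then show ?thesis using Cons y by simp
  next
    case True
    show ?thesis using push_push[OF W assms(4,5) b(2,3), of i] Cons y True by auto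
  qed
qed

lemma P_assoc:
  assumes "rw p n xs" "rw p n ys" "rw p n zs"
  shows "foldr (cp_push p) (foldr (cp_push p) xs ys) zs = foldr (cp_push p) xs (foldr (cp_push p) ys zs)"
  using assms(1)
proof (induction xs)
  case (Cons x xs)
  obtain i a where x: "x = (i,a)" by force
  have xs: "rw p n xs" using Cons rw_tl by blast
  have v: "i < n" "0 < a" "a < p" using Cons.prems x by (cases xs; auto)+
  have "foldr (cp_push p) (foldr (cp_push p) (x#xs) ys) zs
      = foldr (cp_push p) (cp_push p (i,a) (foldr (cp_push p) xs ys)) zs" using x by simp
  also have "\<dots> = cp_push p (i,a) (foldr (cp_push p) (foldr (cp_push p) xs ys) zs)"
    by (rule push_foldr[OF rw_foldr[OF assms(2) xs] assms(3) v])
  also have "\<dots> = foldr (cp_push p) (x#xs) (foldr (cp_push p) ys zs)"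
    using Cons.IH[OF xs] x by simp
  finally show ?case .
qed simp

lemma P_group: assumes "1 < p" shows "group (Cp_free_prod p n)"
proof (rule groupI)
  show "\<one>\<^bsub>Cp_free_prod p n\<^esub> \<in> carrier (Cp_free_prod p n)" by (simp add: carrier_P one_P)
next
  fix x y assume "x \<in> carrier (Cp_free_prod p n)" "y \<in> carrier (Cp_free_prod p n)"
  then show "x \<otimes>\<^bsub>Cp_free_prod p n\<^esub> y \<in> carrier (Cp_free_prod p n)"
    by (simp add: carrier_P mult_P rw_foldr)
next
  fix x y z assume "x \<in> carrier (Cp_free_prod p n)" "y \<in> carrier (Cp_free_prod p n)" "z \<in> carrier (Cp_free_prod p n)"
  then show "x \<otimes>\<^bsub>Cp_free_prod p n\<^esub> y \<otimes>\<^bsub>Cp_free_prod p n\<^esub> z =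
         x \<otimes>\<^bsub>Cp_free_prod p n\<^esub> (y \<otimes>\<^bsub>Cp_free_prod p n\<^esub> z)"
    by (simp add: carrier_P mult_P P_assoc)
next
  fix x assume "x \<in> carrier (Cp_free_prod p n)"
  then show "\<one>\<^bsub>Cp_free_prod p n\<^esub> \<otimes>\<^bsub>Cp_free_prod p n\<^esub> x = x" by (simp add: mult_P one_P)
next
  fix x assume "x \<in> carrier (Cp_free_prod p n)"
  then have "rw p n x" by (simp add: carrier_P)
  then show "\<exists>y\<in>carrier (Cp_free_prod p n). y \<otimes>\<^bsub>Cp_free_prod p n\<^esub> x = \<one>\<^bsub>Cp_free_prod p n\<^esub>"
  proof (induction x)
    case Nil then show ?case by (auto simp: carrier_P mult_P one_P intro!: exI[of _ "[]"])
  next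
    case (Cons x w)
    obtain i a where x: "x = (i,a)" by force
    have w: "rw p n w" using Cons rw_tl by blast
    have v: "i < n" "0 < a" "a < p" using Cons.prems x by (cases w; auto)+
    obtain y where y: "rw p n y" "foldr (cp_push p) y w = []"
      using Cons.IH[OF w] by (auto simp: carrier_P mult_P one_P)
    have xw: "cp_push p (i,a) w = (i,a) # w"
      using Cons.prems x by (cases w) auto
    have inv: "rw p n [(i, p - a)]" using v by auto
    have "foldr (cp_push p) (foldr (cp_push p) y [(i, p - a)]) ((i,a)#w)
        = foldr (cp_push p) y (foldr (cp_push p) [(i, p - a)] ((i,a)#w))"
      using P_assoc[OF y(1) inv Cons.prems] x by simp
    also have "foldr (cp_push p) [(i, p - a)] ((i,a)#w) = w" using v by simp
    finally have "foldr (cp_push p) (foldr (cp_push p) y [(i, p - a)]) (x#w) = []"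
      using y x by simp
    moreover have "rw p n (foldr (cp_push p) y [(i, p - a)])" using rw_foldr[OF inv y(1)] .
    ultimately show ?case by (auto simp: carrier_P mult_P one_P)
  qed
qed




definition evalP :: "('c,'d) monoid_scheme \<Rightarrow> (nat \<Rightarrow> 'c) \<Rightarrow> (nat \<times> nat) list \<Rightarrow> 'c" where
  "evalP T t ws = foldr (\<lambda>(i,a) acc. t i [^]\<^bsub>T\<^esub> a \<otimes>\<^bsub>T\<^esub> acc) ws \<one>\<^bsub>T\<^esub>"

lemma (in group) pow_mod_p:
  assumes "x \<in> carrier G" "x [^] (p::nat) = \<one>"
  shows "x [^] (m::nat) = x [^] (m mod p)"
proof -
  have "x [^] m = x [^] (p * (m div p) + m mod p)" by (simp only: mult_div_mod_eq)
  also have "\<dots> = (x [^] p) [^] (m div p) \<otimes> x [^] (m mod p)"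
    using assms(1) by (metis nat_pow_mult nat_pow_pow)
  also have "\<dots> = x [^] (m mod p)" using assms by simp
  finally show ?thesis .
qed

lemma evalP_closed:
  assumes "group T" "\<forall>i<n. t i \<in> carrier T" "rw p n ws"
  shows "evalP T t ws \<in> carrier T"
  using assms(3)
proof (induction ws)
  case (Cons x w)
  obtain i a where x: "x = (i,a)" by force
  have "i < n" using Cons.prems x by (cases w; auto)
  then show ?case using Cons rw_tl[OF Cons.prems] x assms
    by (auto simp: evalP_def group.is_monoid monoid.m_closed monoid.nat_pow_closed)
qed (simp add: evalP_def group.is_monoid monoid.one_closed assms)

lemma evalP_push:
  assumes T: "group T" and t: "\<forall>i<n. t i \<in> carrier T \<and> t i [^]\<^bsub>T\<^esub> p = \<one>\<^bsub>T\<^esub>"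
    and w: "rw p n w" and i: "i < n"
  shows "evalP T t (cp_push p (i,a) w) = t i [^]\<^bsub>T\<^esub> a \<otimes>\<^bsub>T\<^esub> evalP T t w"
proof (cases w)
  case Nil then show ?thesis by (simp add: evalP_def)
next
  case (Cons y w')
  obtain j b where y: "y = (j,b)" by force
  interpret T: group T by fact
  have w': "rw p n w'" using w Cons rw_tl by blast
  have ti: "t i \<in> carrier T" "t i [^]\<^bsub>T\<^esub> p = \<one>\<^bsub>T\<^esub>" using t i by auto
  have E: "evalP T t w' \<in> carrier T" using evalP_closed[OF T _ w'] t by auto
  show ?thesis
  proof (cases "i = j")
    case False then show ?thesis using Cons y by (simp add: evalP_def)
  next
    case True
    have "t i [^]\<^bsub>T\<^esub> a \<otimes>\<^bsub>T\<^esub> evalP T t w = t i [^]\<^bsub>T\<^esub> a \<otimes>\<^bsub>T\<^esub> (t i [^]\<^bsub>T\<^esub> b \<otimes>\<^bsub>T\<^esub> evalP T t w')"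
      using Cons y True by (simp add: evalP_def)
    also have "\<dots> = t i [^]\<^bsub>T\<^esub> ((a + b) mod p) \<otimes>\<^bsub>T\<^esub> evalP T t w'"
      using ti E by (simp add: T.m_assoc[symmetric] T.nat_pow_mult T.pow_mod_p[of _ p "a+b"])
    finally show ?thesis using Cons y True ti E by (simp add: evalP_def)
  qed
qed

lemma evalP_mult:
  assumes T: "group T" and t: "\<forall>i<n. t i \<in> carrier T \<and> t i [^]\<^bsub>T\<^esub> p = \<one>\<^bsub>T\<^esub>"
    and xs: "rw p n xs" and ys: "rw p n ys"
  shows "evalP T t (foldr (cp_push p) xs ys) = evalP T t xs \<otimes>\<^bsub>T\<^esub> evalP T t ys"
  using xs
proof (induction xs)
  case Nil
  then show ?case using evalP_closed[OF T _ ys] t T by (simp add: evalP_def group.is_monoid monoid.l_one)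
next
  case (Cons x xs)
  obtain i a where x: "x = (i,a)" by force
  interpret T: group T by fact
  have xs': "rw p n xs" using Cons rw_tl by blast
  have i: "i < n" using Cons.prems x by (cases xs; auto)
  have c: "evalP T t xs \<in> carrier T" "evalP T t ys \<in> carrier T" "t i \<in> carrier T"
    using evalP_closed[OF T _ xs'] evalP_closed[OF T _ ys] t i by auto
  show ?case using evalP_push[OF T t rw_foldr[OF ys xs'] i, of a] Cons.IH[OF xs'] x c
    by (simp add: evalP_def T.m_assoc)
qed

lemma evalP_hom:
  assumes T: "group T" and t: "\<forall>i<n. t i \<in> carrier T \<and> t i [^]\<^bsub>T\<^esub> p = \<one>\<^bsub>T\<^esub>"
  shows "evalP T t \<in> hom (Cp_free_prod p n) T"
proof (rule homI)
  fix x assume "x \<in> carrier (Cp_free_prod p n)"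
  then show "evalP T t x \<in> carrier T" using evalP_closed[OF T, of n t p x] t by (auto simp: carrier_P)
next
  fix x y assume "x \<in> carrier (Cp_free_prod p n)" "y \<in> carrier (Cp_free_prod p n)"
  then show "evalP T t (x \<otimes>\<^bsub>Cp_free_prod p n\<^esub> y) = evalP T t x \<otimes>\<^bsub>T\<^esub> evalP T t y"
    using evalP_mult[OF T t] by (auto simp: carrier_P mult_P)
qed




definition transport :: "('a,'b) monoid_scheme \<Rightarrow> ('a \<Rightarrow> nat) \<Rightarrow> nat monoid" where
  "transport GG f = \<lparr>carrier = f ` carrier GG,
     monoid.mult = (\<lambda>x y. f (monoid.mult GG (inv_into (carrier GG) f x) (inv_into (carrier GG) f y))),
     one = f (one GG)\<rparr>"

lemma transport_group:
  assumes GG: "group GG" and f: "inj_on f (carrier GG)"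
  shows "group (transport GG f)" and "f \<in> iso GG (transport GG f)"
proof -
  interpret GG: group GG by fact
  have ii: "inv_into (carrier GG) f (f x) = x" if "x \<in> carrier GG" for x
    using f that by simp
  show "group (transport GG f)"
  proof (rule groupI)
    fix x y assume "x \<in> carrier (transport GG f)" "y \<in> carrier (transport GG f)"
    then show "x \<otimes>\<^bsub>transport GG f\<^esub> y \<in> carrier (transport GG f)"
      by (auto simp: transport_def ii)
  next
    show "\<one>\<^bsub>transport GG f\<^esub> \<in> carrier (transport GG f)" by (simp add: transport_def)
  next
    fix x y z assume "x \<in> carrier (transport GG f)" "y \<in> carrier (transport GG f)" "z \<in> carrier (transport GG f)"
    then show "x \<otimes>\<^bsub>transport GG f\<^esub> y \<otimes>\<^bsub>transport GG f\<^esub> z =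
           x \<otimes>\<^bsub>transport GG f\<^esub> (y \<otimes>\<^bsub>transport GG f\<^esub> z)"
      by (auto simp: transport_def ii GG.m_assoc)
  next
    fix x assume "x \<in> carrier (transport GG f)"
    then show "\<one>\<^bsub>transport GG f\<^esub> \<otimes>\<^bsub>transport GG f\<^esub> x = x"
      by (auto simp: transport_def ii)
  next
    fix x assume "x \<in> carrier (transport GG f)"
    then obtain a where a: "a \<in> carrier GG" "x = f a" by (auto simp: transport_def)
    then show "\<exists>y\<in>carrier (transport GG f). y \<otimes>\<^bsub>transport GG f\<^esub> x = \<one>\<^bsub>transport GG f\<^esub>"
      by (auto simp: transport_def ii intro!: bexI[of _ "inv\<^bsub>GG\<^esub> a"])
  qed
  show "f \<in> iso GG (transport GG f)"
    unfolding iso_def bij_betw_def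
    using f by (auto intro!: homI simp: transport_def ii)
qed

lemma transport_inv:
  assumes "inj_on f (carrier GG)" "y \<in> carrier (transport GG f)"
  shows "inv_into (carrier GG) f y \<in> carrier GG" "f (inv_into (carrier GG) f y) = y"
  using assms by (auto simp: transport_def)



lemma word_eval_Nil[simp]: "word_eval G [] = \<one>\<^bsub>G\<^esub>" by (simp add: word_eval_def)
lemma word_eval_Cons[simp]: "word_eval G ((a,b)#us) = (if b then a else inv\<^bsub>G\<^esub> a) \<otimes>\<^bsub>G\<^esub> word_eval G us"
  by (simp add: word_eval_def)
lemma word_eval_append:
  assumes "group G" "set ws \<subseteq> carrier G \<times> UNIV" "set vs \<subseteq> carrier G \<times> UNIV"
  shows "word_eval G (ws @ vs) = word_eval G ws \<otimes>\<^bsub>G\<^esub> word_eval G vs"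
    and "word_eval G ws \<in> carrier G"
proof -
  interpret group G by fact
  have cl: "set us \<subseteq> carrier G \<times> UNIV \<Longrightarrow> word_eval G us \<in> carrier G" for us
  proof (induction us)
    case (Cons u us) then show ?case by (cases u) auto
  qed simp
  show "word_eval G ws \<in> carrier G" using cl assms by blast
  show "word_eval G (ws @ vs) = word_eval G ws \<otimes>\<^bsub>G\<^esub> word_eval G vs"
    using assms(2)
  proof (induction ws)
    case Nil then show ?case using cl[OF assms(3)] by simp
  next
    case (Cons w ws)
    obtain a b where w: "w = (a,b)" by force
    have a: "a \<in> carrier G" using Cons.prems w by auto
    have ws: "set ws \<subseteq> carrier G \<times> UNIV" using Cons.prems by auto
    have IH: "word_eval G (ws @ vs) = word_eval G ws \<otimes>\<^bsub>G\<^esub> word_eval G vs" using Cons.IH ws by blast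
    have e: "word_eval G (w # us) = (if b then a else inv\<^bsub>G\<^esub> a) \<otimes>\<^bsub>G\<^esub> word_eval G us" for us
      using w by simp
    show ?case unfolding append_Cons e IH
      using a cl[OF assms(3)] cl[OF ws] by (simp add: m_assoc)
  qed
qed



lemma generate_words:
  assumes "group G" "S \<subseteq> carrier G" "x \<in> generate G S"
  shows "\<exists>ws. set ws \<subseteq> S \<times> UNIV \<and> x = word_eval G ws"
  using assms(3)
proof (induction rule: generate.induct)
  case one show ?case by (rule exI[of _ "[]"]) simp
next
  case (incl h)
  have "h \<in> carrier G" using incl assms(2) by blast
  then have "word_eval G [(h,True)] = h" using group.is_monoid[OF assms(1)] by (simp add: monoid.r_one)
  then show ?case using incl by (intro exI[of _ "[(h,True)]"]) simp
next
  case (inv h)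
  have "h \<in> carrier G" using inv assms(2) by blast
  then have "word_eval G [(h,False)] = inv\<^bsub>G\<^esub> h" using assms(1) by (simp add: group.is_monoid monoid.r_one group.inv_closed)
  then show ?case using inv by (intro exI[of _ "[(h,False)]"]) simp
next
  case (eng h1 h2)
  then obtain w1 w2 where w: "set w1 \<subseteq> S \<times> UNIV" "h1 = word_eval G w1" "set w2 \<subseteq> S \<times> UNIV" "h2 = word_eval G w2"
    by blast
  have c: "set w1 \<subseteq> carrier G \<times> UNIV" "set w2 \<subseteq> carrier G \<times> UNIV" using w assms(2) by blast+
  have "word_eval G (w1 @ w2) = h1 \<otimes>\<^bsub>G\<^esub> h2" using word_eval_append(1)[OF assms(1) c] w by simp
  moreover have "set (w1 @ w2) \<subseteq> S \<times> UNIV" using w by simp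
  ultimately show ?case by metis
qed



lemma fg_countable:
  assumes "group G" "finitely_generated G"
  shows "countable (carrier G)"
proof -
  obtain S where S: "finite S" "S \<subseteq> carrier G" "generate G S = carrier G"
    using assms(2) unfolding finitely_generated_def by blast
  have "carrier G \<subseteq> word_eval G ` lists (S \<times> UNIV)"
  proof
    fix x assume "x \<in> carrier G"
    then obtain ws where "set ws \<subseteq> S \<times> UNIV" "x = word_eval G ws"
      using generate_words[OF assms(1) S(2)] S(3) by auto
    then show "x \<in> word_eval G ` lists (S \<times> UNIV)"
      by (intro image_eqI[of _ _ ws]) (auto simp: in_lists_conv_set)
  qed
  moreover have "countable (S \<times> (UNIV::bool set))"
    using S(1) by (simp add: countable_finite)
  then have "countable (lists (S \<times> (UNIV::bool set)))"
    by (rule countable_lists)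
  ultimately show ?thesis using countable_subset countable_image by metis
qed



definition RR :: "(nat \<Rightarrow> nat) \<Rightarrow> (nat \<Rightarrow> nat) \<Rightarrow> nat set \<Rightarrow> (nat \<times> nat) set" where
  "RR src tgt Es = {(src e, tgt e) | e. e \<in> Es} \<union> {(tgt e, src e) | e. e \<in> Es}"

lemma deg_sum:
  assumes "finite Vs" "finite Es" "\<forall>e\<in>Es. src e \<in> Vs"
  shows "(\<Sum>v\<in>Vs. card {e\<in>Es. src e = v}) = card Es"
  using sum.group[OF assms(2,1), of src "\<lambda>_. 1::nat"] assms(3) by auto

lemma leaf_exists:
  assumes fin: "finite Vs" "finite Es" and c: "card Es + 1 = card Vs"
    and ends: "\<forall>e\<in>Es. src e \<in> Vs \<and> tgt e \<in> Vs"
  shows "\<exists>v\<in>Vs. card {e\<in>Es. src e = v \<or> tgt e = v} \<le> 1"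
proof (rule ccontr)
  assume "\<not> ?thesis"
  then have h: "\<forall>v\<in>Vs. 2 \<le> card {e\<in>Es. src e = v \<or> tgt e = v}" by auto
  have le: "card {e\<in>Es. src e = v \<or> tgt e = v} \<le> card {e\<in>Es. src e = v} + card {e\<in>Es. tgt e = v}" for v
  proof -
    have "{e\<in>Es. src e = v \<or> tgt e = v} = {e\<in>Es. src e = v} \<union> {e\<in>Es. tgt e = v}" by auto
    then show ?thesis by (simp add: card_Un_le)
  qed
  have "(\<Sum>v\<in>Vs. 2) \<le> (\<Sum>v\<in>Vs. card {e\<in>Es. src e = v} + card {e\<in>Es. tgt e = v})"
  proof (rule sum_mono)
    fix x assume "x \<in> Vs"
    then show "2 \<le> card {e\<in>Es. src e = x} + card {e\<in>Es. tgt e = x}" using h le[of x] by fastforce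
  qed
  also have "\<dots> = card Es + card Es"
    using deg_sum[OF fin, of src] deg_sum[OF fin, of tgt] ends by (simp add: sum.distrib)
  finally show False using c by simp
qed

lemma rtrancl_sym:
  assumes "\<And>x y. (x,y) \<in> R \<Longrightarrow> (y,x) \<in> R" "(a,b) \<in> R\<^sup>*"
  shows "(b,a) \<in> R\<^sup>*"
  using assms(2)
proof (induction rule: rtrancl_induct)
  case (step y z)
  then show ?case using assms(1) by (meson converse_rtrancl_into_rtrancl)
qed simp

lemma RR_sym: "(x,y) \<in> RR src tgt Es \<Longrightarrow> (y,x) \<in> RR src tgt Es"
  by (auto simp: RR_def)

lemma tree_count:
  assumes "finite Vs" "finite Es" "card Es + 1 = card Vs"
    "\<forall>e\<in>Es. src e \<in> Vs \<and> tgt e \<in> Vs \<and> src e \<noteq> tgt e"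
    "\<forall>u\<in>Vs. \<forall>w\<in>Vs. (u,w) \<in> (RR src tgt Es)\<^sup>*"
    "Es = {} \<longrightarrow> (\<forall>v\<in>Vs. 1 \<le> (a::nat\<Rightarrow>nat) v)"
    "\<forall>e\<in>Es. (b::nat\<Rightarrow>nat) e < a (src e) \<and> b e < a (tgt e)"
  shows "sum b Es + card Vs \<le> sum a Vs \<and>
         (sum a Vs = sum b Es + card Vs \<longrightarrow> (\<forall>v\<in>Vs. a v = 1) \<and> (\<forall>e\<in>Es. b e = 0))"
  using assms
proof (induction "card Es" arbitrary: Vs Es)
  case 0
  then have "Es = {}" by auto
  then have "card Vs = 1" using 0 by simp
  then obtain r where "Vs = {r}" by (rule card_1_singletonE)
  then show ?case using 0 \<open>Es = {}\<close> by auto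
next
  case (Suc m)
  note fin = Suc.prems(1,2)
  have ne: "Es \<noteq> {}" using Suc.hyps(2) by auto
  have c2: "2 \<le> card Vs" using Suc.hyps(2) Suc.prems(3) by simp
  obtain v where v: "v \<in> Vs" "card {e\<in>Es. src e = v \<or> tgt e = v} \<le> 1"
    using leaf_exists[OF fin Suc.prems(3)] Suc.prems(4) by blast
  have "card (Vs - {v}) = card Vs - 1" using v(1) fin(1) by (simp add: card_Diff_singleton)
  then have "card (Vs - {v}) \<noteq> 0" using c2 by simp
  then have "Vs - {v} \<noteq> {}" by (metis card.empty)
  then obtain u where u: "u \<in> Vs" "u \<noteq> v" by blast
  have "(v,u) \<in> (RR src tgt Es)\<^sup>*" using Suc.prems(5) u(1) v(1) by blast
  then obtain y where "(v,y) \<in> RR src tgt Es" using u(2) by (cases rule: converse_rtranclE) auto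
  then obtain e0 where e0: "e0 \<in> Es" "src e0 = v \<or> tgt e0 = v" by (auto simp: RR_def)
  let ?I = "{e\<in>Es. src e = v \<or> tgt e = v}"
  have "?I \<noteq> {}" using e0 by blast
  moreover have "finite ?I" using fin by simp
  ultimately have "card ?I > 0" by (simp add: card_gt_0_iff)
  then have "card ?I = 1" using v(2) by linarith
  then obtain e where I: "?I = {e}" by (rule card_1_singletonE)
  have e: "e \<in> Es" "src e = v \<or> tgt e = v" using I by auto
  have other: "\<And>f. f \<in> Es \<Longrightarrow> f \<noteq> e \<Longrightarrow> src f \<noteq> v \<and> tgt f \<noteq> v" using I by blast
  define w where "w = (if src e = v then tgt e else src e)"
  have w: "w \<in> Vs" "w \<noteq> v" using e Suc.prems(4) by (auto simp: w_def)
  have endsw: "{src e, tgt e} = {v, w}" using e Suc.prems(4) by (auto simp: w_def)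
  define Vs' where "Vs' = Vs - {v}"
  define Es' where "Es' = Es - {e}"
  have cE: "m = card Es'" using Suc.hyps(2) e(1) fin by (simp add: Es'_def)
  have "card Es > 0" using e(1) fin by (auto simp: card_gt_0_iff)
  then have cV: "card Es' + 1 = card Vs'" using Suc.prems(3) e(1) v(1) fin
    by (simp add: Es'_def Vs'_def)
  have ends': "\<forall>f\<in>Es'. src f \<in> Vs' \<and> tgt f \<in> Vs' \<and> src f \<noteq> tgt f"
    using Suc.prems(4) other by (auto simp: Es'_def Vs'_def)
  have reach: "u' = v \<or> (w,u') \<in> (RR src tgt Es')\<^sup>*" if "(v,u') \<in> (RR src tgt Es)\<^sup>*" for u'
    using that
  proof (induction rule: rtrancl_induct)
    case base then show ?case by simp
  next
    case (step y z)
    from step.hyps(2) obtain f where f: "f \<in> Es" "{y,z} = {src f, tgt f}"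
      by (auto simp: RR_def)
    show ?case
    proof (cases "f = e")
      case True
      then have "z = v \<or> z = w" using f endsw by auto
      then show ?thesis by auto
    next
      case False
      then have f': "f \<in> Es'" "src f \<noteq> v" "tgt f \<noteq> v" using other f by (auto simp: Es'_def)
      have "y \<in> {src f, tgt f}" using f(2) by (metis insertI1)
      then have yv: "y \<noteq> v" using f' by auto
      have "(y,z) \<in> RR src tgt Es'" using f f' by (auto simp: RR_def doubleton_eq_iff)
      then show ?thesis using step.IH yv by (meson rtrancl.rtrancl_into_rtrancl)
    qed
  qed
  have conn': "\<forall>x\<in>Vs'. \<forall>y\<in>Vs'. (x,y) \<in> (RR src tgt Es')\<^sup>*"
  proof (intro ballI)
    fix x y assume "x \<in> Vs'" "y \<in> Vs'"
    then have "(w,x) \<in> (RR src tgt Es')\<^sup>*" "(w,y) \<in> (RR src tgt Es')\<^sup>*"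
      using reach Suc.prems(5) v(1) by (auto simp: Vs'_def)
    then show "(x,y) \<in> (RR src tgt Es')\<^sup>*"
      using rtrancl_sym[OF RR_sym] by (meson rtrancl_trans)
  qed
  have wv: "w \<in> Vs'" using w by (simp add: Vs'_def)
  have bnd: "b e < a v" "b e < a w" using Suc.prems(7) e endsw by (auto simp: w_def)
  have one': "Es' = {} \<longrightarrow> (\<forall>x\<in>Vs'. 1 \<le> a x)"
  proof
    assume "Es' = {}"
    then have "card Vs' = 1" using cV by simp
    then obtain x where "Vs' = {x}" by (rule card_1_singletonE)
    then have "Vs' = {w}" using wv by auto
    then show "\<forall>x\<in>Vs'. 1 \<le> a x" using bnd by auto
  qed
  have wt': "\<forall>f\<in>Es'. b f < a (src f) \<and> b f < a (tgt f)" using Suc.prems(7) by (auto simp: Es'_def)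
  have IH: "sum b Es' + card Vs' \<le> sum a Vs' \<and>
         (sum a Vs' = sum b Es' + card Vs' \<longrightarrow> (\<forall>x\<in>Vs'. a x = 1) \<and> (\<forall>f\<in>Es'. b f = 0))"
  proof -
    have "finite Vs'" "finite Es'" using fin by (auto simp: Vs'_def Es'_def)
    then show ?thesis using Suc.hyps(1)[OF cE _ _ cV ends' conn' one' wt'] by blast
  qed
  have sA: "sum a Vs = a v + sum a Vs'" using fin v(1) by (simp add: Vs'_def sum.remove)
  have sB: "sum b Es = b e + sum b Es'" using fin e(1) by (simp add: Es'_def sum.remove)
  have cVV: "card Vs = card Vs' + 1" using cV Suc.prems(3) cE Suc.hyps(2) by simp
  show ?case
  proof
    show "sum b Es + card Vs \<le> sum a Vs" using IH sA sB cVV bnd by linarith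
  next
    show "sum a Vs = sum b Es + card Vs \<longrightarrow> (\<forall>x\<in>Vs. a x = 1) \<and> (\<forall>f\<in>Es. b f = 0)"
    proof
      assume eq: "sum a Vs = sum b Es + card Vs"
      then have eq': "sum a Vs' = sum b Es' + card Vs'" "a v = b e + 1"
        using IH sA sB cVV bnd by linarith+
      then have all: "\<forall>x\<in>Vs'. a x = 1" "\<forall>f\<in>Es'. b f = 0" using IH by auto
      then have "a w = 1" using wv by auto
      then have "b e = 0" "a v = 1" using bnd eq' by auto
      then show "(\<forall>x\<in>Vs. a x = 1) \<and> (\<forall>f\<in>Es. b f = 0)"
        using all by (auto simp: Vs'_def Es'_def)
    qed
  qed
qed




lemma card_Zp_prod: "p > 0 \<Longrightarrow> card (carrier (product_group {..<m} (\<lambda>_. integer_mod_group p))) = p ^ m"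
  by (simp add: carrier_integer_mod_group card_PiE)

lemma counting:
  fixes p n k :: nat and V E :: "nat \<Rightarrow> 'b monoid"
  assumes pr: "Factorial_Ring.prime p" and n1: "n \<ge> 1"
    and gog: "graph_of_groups k src tgt V E \<alpha> \<beta>"
    and Vi: "\<forall>v < k. \<exists>m::nat. V v \<cong> product_group {..<m} (\<lambda>_. integer_mod_group p)"
    and pprop: "\<forall>e < k - 1. \<alpha> e ` carrier (E e) \<noteq> carrier (V (src e)) \<and>
                     \<beta> e ` carrier (E e) \<noteq> carrier (V (tgt e))"
    and pprod: "(\<Prod>v<k. real (card (carrier (V v)))) / (\<Prod>e<k - 1. real (card (carrier (E e)))) = real p ^ n"
    and kn: "k \<ge> n"
  shows "k = n \<and> (\<forall>v<k. card (carrier (V v)) = p) \<and> (\<forall>e<k-1. card (carrier (E e)) = 1)"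
proof -
  have p1: "1 < p" using pr prime_gt_1_nat by blast
  have ex_a: "\<exists>m. card (carrier (V v)) = p ^ m" if vk: "v < k" for v
  proof -
    obtain m :: nat where "V v \<cong> product_group {..<m} (\<lambda>_. integer_mod_group p)" using Vi vk by blast
    then have "card (carrier (V v)) = card (carrier (product_group {..<m} (\<lambda>_. integer_mod_group p)))"
      by (rule iso_same_card)
    also have "\<dots> = p ^ m" using card_Zp_prod p1 by simp
    finally have "card (carrier (V v)) = p ^ m" .
    then show ?thesis by blast
  qed
  define a where "a v = (SOME m. card (carrier (V v)) = p ^ m)" for v
  have ca: "card (carrier (V v)) = p ^ a v" if "v < k" for v
    unfolding a_def using someI_ex[OF ex_a[OF that]] .
  have tg: "tree_graph k src tgt" and grpV: "\<forall>v<k. group (V v)"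
    and grpE: "\<forall>e<k-1. group (E e) \<and> \<alpha> e \<in> hom (E e) (V (src e)) \<and> inj_on (\<alpha> e) (carrier (E e)) \<and>
        \<beta> e \<in> hom (E e) (V (tgt e)) \<and> inj_on (\<beta> e) (carrier (E e))"
    using gog by (auto simp: graph_of_groups_def)
  have k1: "1 \<le> k" and ends: "\<forall>e < k - 1. src e < k \<and> tgt e < k \<and> src e \<noteq> tgt e"
    and conn0: "\<forall>v < k. (0, v) \<in> ({(src e, tgt e) | e. e < k - 1} \<union> {(tgt e, src e) | e. e < k - 1})\<^sup>*"
    using tg by (auto simp: tree_graph_def)
  have sub_card: "\<exists>i. card (carrier Eg) = p ^ i \<and> i < a w"
    if "w < k" "group Eg" "h \<in> hom Eg (V w)" "inj_on h (carrier Eg)" "h ` carrier Eg \<noteq> carrier (V w)"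
    for Eg :: "'b monoid" and h w
  proof -
    interpret gh: group_hom Eg "V w" h using that grpV by (auto simp: group_hom_def group_hom_axioms_def)
    have sg: "subgroup (h ` carrier Eg) (V w)" by (rule gh.img_is_subgroup)
    have "card (carrier (V w)) > 0" using ca[OF that(1)] p1 by simp
    then have fin: "finite (carrier (V w))" by (rule card_ge_0_finite)
    have "card (rcosets\<^bsub>V w\<^esub> (h ` carrier Eg)) * card (h ` carrier Eg) = order (V w)"
      using group.lagrange[OF gh.H.is_group sg] .
    then have "card (h ` carrier Eg) dvd order (V w)" using dvd_triv_right by metis
    then have "card (h ` carrier Eg) dvd p ^ a w" using ca[OF that(1)] unfolding order_def by simp
    then obtain i where i: "i \<le> a w" "card (h ` carrier Eg) = p ^ i"
      using divides_primepow_nat[OF pr] by blast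
    have "h ` carrier Eg \<subset> carrier (V w)" using subgroup.subset[OF sg] that(5) by blast
    then have "card (h ` carrier Eg) < card (carrier (V w))" by (rule psubset_card_mono[OF fin])
    then have "p ^ i < p ^ a w" using i ca[OF that(1)] by simp
    then have "i < a w" using p1 power_less_imp_less_exp by blast
    moreover have "card (carrier Eg) = p ^ i" using i card_image[OF that(4)] by simp
    ultimately show ?thesis by blast
  qed
  have EE: "src e < k" "tgt e < k" "group (E e)" "\<alpha> e \<in> hom (E e) (V (src e))" "inj_on (\<alpha> e) (carrier (E e))"
        "\<beta> e \<in> hom (E e) (V (tgt e))" "inj_on (\<beta> e) (carrier (E e))"
        "\<alpha> e ` carrier (E e) \<noteq> carrier (V (src e))" "\<beta> e ` carrier (E e) \<noteq> carrier (V (tgt e))"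
    if "e < k - 1" for e
    using that ends grpE pprop by simp_all
  have ex_b: "\<exists>i. card (carrier (E e)) = p ^ i" if "e < k - 1" for e
    using sub_card[OF EE(1,3,4,5,8)[OF that]] by blast
  define b where "b e = (SOME i. card (carrier (E e)) = p ^ i)" for e
  have cb: "card (carrier (E e)) = p ^ b e" if "e < k - 1" for e
    unfolding b_def using someI_ex[OF ex_b[OF that]] .
  have bs: "b e < a (src e)" "b e < a (tgt e)" if ek: "e < k - 1" for e
  proof -
    obtain i where "card (carrier (E e)) = p ^ i" "i < a (src e)"
      using sub_card[OF EE(1,3,4,5,8)[OF ek]] by blast
    then show "b e < a (src e)" using cb[OF ek] p1 by simp
    obtain j where "card (carrier (E e)) = p ^ j" "j < a (tgt e)"
      using sub_card[OF EE(2,3,6,7,9)[OF ek]] by blast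
    then show "b e < a (tgt e)" using cb[OF ek] p1 by simp
  qed
  have pa: "(\<Prod>v<k. real (card (carrier (V v)))) = real p ^ (\<Sum>v<k. a v)"
    by (simp add: ca power_sum)
  have pb: "(\<Prod>e<k-1. real (card (carrier (E e)))) = real p ^ (\<Sum>e<k-1. b e)"
    by (simp add: cb power_sum)
  have "real p ^ (\<Sum>v<k. a v) = real p ^ n * real p ^ (\<Sum>e<k-1. b e)"
    using pprod p1 unfolding pa pb by (simp add: divide_eq_eq)
  then have "real p ^ (\<Sum>v<k. a v) = real p ^ (n + (\<Sum>e<k-1. b e))" by (simp add: power_add)
  then have sumeq: "(\<Sum>v<k. a v) = n + (\<Sum>e<k-1. b e)" using p1 by (simp add: power_inject_exp)
  have RReq: "{(src e, tgt e) | e. e < k - 1} \<union> {(tgt e, src e) | e. e < k - 1} = RR src tgt {..<k-1}"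
    by (auto simp: RR_def)
  have conn: "\<forall>u\<in>{..<k}. \<forall>w\<in>{..<k}. (u,w) \<in> (RR src tgt {..<k-1})\<^sup>*"
  proof (intro ballI)
    fix u w assume "u \<in> {..<k}" "w \<in> {..<k}"
    then have "(0,u) \<in> (RR src tgt {..<k-1})\<^sup>*" "(0,w) \<in> (RR src tgt {..<k-1})\<^sup>*"
      using conn0 RReq by auto
    then show "(u,w) \<in> (RR src tgt {..<k-1})\<^sup>*"
      using rtrancl_sym[OF RR_sym] by (meson rtrancl_trans)
  qed
  have one: "{..<k-1} = {} \<longrightarrow> (\<forall>v\<in>{..<k}. 1 \<le> a v)"
  proof
    assume "{..<k-1} = {}"
    then have "k - 1 = 0" by (simp add: lessThan_empty_iff)
    then have "k = 1" using k1 by simp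
    then show "\<forall>v\<in>{..<k}. 1 \<le> a v" using sumeq n1 by simp
  qed
  have TC: "sum b {..<k-1} + card {..<k} \<le> sum a {..<k} \<and>
         (sum a {..<k} = sum b {..<k-1} + card {..<k} \<longrightarrow> (\<forall>v\<in>{..<k}. a v = 1) \<and> (\<forall>e\<in>{..<k-1}. b e = 0))"
  proof -
    have c1: "card {..<k-1} + 1 = card {..<k}" using k1 by simp
    have c2: "\<forall>e\<in>{..<k-1}. src e \<in> {..<k} \<and> tgt e \<in> {..<k} \<and> src e \<noteq> tgt e" using ends by simp
    have c3: "\<forall>e\<in>{..<k-1}. b e < a (src e) \<and> b e < a (tgt e)" using bs by simp
    show ?thesis by (rule tree_count[OF finite_lessThan finite_lessThan c1 c2 conn one c3])
  qed
  have le: "sum b {..<k-1} + k \<le> sum a {..<k}" using conjunct1[OF TC] by simp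
  then have "k \<le> n" using sumeq by linarith
  then have kn': "k = n" using kn by linarith
  have "sum a {..<k} = sum b {..<k-1} + card {..<k}" using sumeq kn' by simp
  then have all: "(\<forall>v\<in>{..<k}. a v = 1) \<and> (\<forall>e\<in>{..<k-1}. b e = 0)" using conjunct2[OF TC] by (rule rev_mp)
  have "\<forall>v<k. card (carrier (V v)) = p"
  proof (intro allI impI)
    fix v assume "v < k" then show "card (carrier (V v)) = p" using all ca[of v] by simp
  qed
  moreover have "\<forall>e<k-1. card (carrier (E e)) = 1"
  proof (intro allI impI)
    fix e assume "e < k - 1" then show "card (carrier (E e)) = 1" using all cb[of e] by simp
  qed
  ultimately show ?thesis using kn' by blast
qed




lemma cyc_rho:
  fixes Vg :: "('b,'c) monoid_scheme"
  assumes grp: "group Vg" and cp: "card (carrier Vg) = p" and pr: "Factorial_Ring.prime p" and vn: "v < n"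
  shows "\<exists>g \<rho>. g \<in> carrier Vg \<and> g [^]\<^bsub>Vg\<^esub> p = \<one>\<^bsub>Vg\<^esub> \<and> \<rho> \<in> hom Vg (Cp_free_prod p n) \<and>
     (\<forall>x\<in>carrier Vg. \<exists>a<p. x = g [^]\<^bsub>Vg\<^esub> a \<and> \<rho> x = (if a = 0 then [] else [(v,a)])) \<and>
     (\<forall>a. 0 < a \<and> a < p \<longrightarrow> \<rho> (g [^]\<^bsub>Vg\<^esub> a) = [(v,a)])"
proof -
  interpret group Vg by fact
  have p1: "1 < p" using pr prime_gt_1_nat by blast
  have fin: "finite (carrier Vg)" using cp p1 by (intro card_ge_0_finite) simp
  have "carrier Vg \<noteq> {\<one>\<^bsub>Vg\<^esub>}" using cp p1 by auto
  then obtain g where g: "g \<in> carrier Vg" "g \<noteq> \<one>\<^bsub>Vg\<^esub>" using one_closed by blast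
  have "ord g dvd p" using ord_dvd_group_order[OF g(1)] cp by (simp add: order_def)
  then have "ord g = 1 \<or> ord g = p" using pr by (simp add: prime_nat_iff)
  moreover have "ord g \<noteq> 1" using ord_eq_1[OF g(1)] g(2) by simp
  ultimately have og: "ord g = p" by simp
  have gp: "g [^]\<^bsub>Vg\<^esub> p = \<one>\<^bsub>Vg\<^esub>" using pow_ord_eq_1[OF g(1)] og by simp
  have rng: "{..<p} = {0..ord g - 1}" using og p1 by auto
  have inj: "inj_on (\<lambda>x. g [^]\<^bsub>Vg\<^esub> x) {..<p}" using ord_inj[OF g(1)] rng by simp
  have sub: "(\<lambda>x. g [^]\<^bsub>Vg\<^esub> x) ` {..<p} \<subseteq> carrier Vg" using g(1) by auto
  have "card ((\<lambda>x. g [^]\<^bsub>Vg\<^esub> x) ` {..<p}) = p" using card_image[OF inj] by simp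
  then have surj: "(\<lambda>x. g [^]\<^bsub>Vg\<^esub> x) ` {..<p} = carrier Vg"
    using card_subset_eq[OF fin sub] cp by simp
  have exa: "\<exists>a. a < p \<and> x = g [^]\<^bsub>Vg\<^esub> a" if "x \<in> carrier Vg" for x
    using that surj by (metis imageE lessThan_iff)
  define dl where "dl x = (SOME a. a < p \<and> x = g [^]\<^bsub>Vg\<^esub> a)" for x
  have dl: "dl x < p" "x = g [^]\<^bsub>Vg\<^esub> (dl x)" if "x \<in> carrier Vg" for x
    using someI_ex[OF exa[OF that]] unfolding dl_def by blast+
  have dlg: "dl (g [^]\<^bsub>Vg\<^esub> a) = a" if "a < p" for a
  proof -
    have "g [^]\<^bsub>Vg\<^esub> a \<in> carrier Vg" using g(1) by simp
    then have "dl (g [^]\<^bsub>Vg\<^esub> a) < p" "g [^]\<^bsub>Vg\<^esub> a = g [^]\<^bsub>Vg\<^esub> (dl (g [^]\<^bsub>Vg\<^esub> a))"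
      using dl by blast+
    then show ?thesis using inj that unfolding inj_on_def by (metis lessThan_iff)
  qed
  define \<rho> where "\<rho> x = (if dl x = 0 then [] else [(v, dl x)])" for x
  have rc: "\<rho> x \<in> carrier (Cp_free_prod p n)" if "x \<in> carrier Vg" for x
    using dl[OF that] vn by (auto simp: \<rho>_def carrier_P)
  have rm: "\<rho> (x \<otimes>\<^bsub>Vg\<^esub> y) = \<rho> x \<otimes>\<^bsub>Cp_free_prod p n\<^esub> \<rho> y" if "x \<in> carrier Vg" "y \<in> carrier Vg" for x y
  proof -
    define a b where "a = dl x" and "b = dl y"
    have ab: "a < p" "b < p" "x = g [^]\<^bsub>Vg\<^esub> a" "y = g [^]\<^bsub>Vg\<^esub> b" using dl that a_def b_def by auto
    have "x \<otimes>\<^bsub>Vg\<^esub> y = g [^]\<^bsub>Vg\<^esub> (a + b)" using ab g(1) by (simp add: nat_pow_mult)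
    also have "\<dots> = g [^]\<^bsub>Vg\<^esub> ((a + b) mod p)" using pow_mod_p[OF g(1) gp] by blast
    finally have "dl (x \<otimes>\<^bsub>Vg\<^esub> y) = (a + b) mod p" using dlg p1 by simp
    then have e: "\<rho> (x \<otimes>\<^bsub>Vg\<^esub> y) = (if (a + b) mod p = 0 then [] else [(v, (a + b) mod p)])"
      by (simp add: \<rho>_def)
    have rx: "\<rho> x = (if a = 0 then [] else [(v, a)])" "\<rho> y = (if b = 0 then [] else [(v, b)])"
      by (simp_all add: \<rho>_def a_def b_def)
    show ?thesis unfolding e rx mult_P using ab(1,2) by auto
  qed
  have hom: "\<rho> \<in> hom Vg (Cp_free_prod p n)" using rc rm by (intro homI) auto
  have "\<forall>x\<in>carrier Vg. \<exists>a<p. x = g [^]\<^bsub>Vg\<^esub> a \<and> \<rho> x = (if a = 0 then [] else [(v,a)])"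
  proof
    fix x assume x: "x \<in> carrier Vg"
    show "\<exists>a<p. x = g [^]\<^bsub>Vg\<^esub> a \<and> \<rho> x = (if a = 0 then [] else [(v,a)])"
    proof -
      have h1: "dl x < p" "x = g [^]\<^bsub>Vg\<^esub> dl x" using dl[OF x] by blast+
      have h2: "\<rho> x = (if dl x = 0 then [] else [(v, dl x)])" by (simp only: \<rho>_def)
      show ?thesis using h1 h2 by blast
    qed
  qed
  moreover have "\<forall>a. 0 < a \<and> a < p \<longrightarrow> \<rho> (g [^]\<^bsub>Vg\<^esub> a) = [(v,a)]"
    using dlg by (simp add: \<rho>_def)
  ultimately show ?thesis using g(1) gp hom by blast
qed




lemma hom_comp': "h \<in> hom A B \<Longrightarrow> f \<in> hom B C \<Longrightarrow> (\<lambda>x. f (h x)) \<in> hom A C"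
  unfolding hom_def by (auto simp: Pi_def)

theorem mainTheorem8:
  fixes p n k :: nat
    and G :: "'a monoid"
    and V E :: "nat \<Rightarrow> 'b monoid"
    and src tgt :: "nat \<Rightarrow> nat"
    and \<alpha> \<beta> :: "nat \<Rightarrow> 'b \<Rightarrow> 'b"
  assumes "Factorial_Ring.prime p" and "odd p" and "n \<ge> 1"
    and "group G" and "finitely_generated G" and "virtually_free G" and "para_Cp_free p n G"
    and "graph_of_groups k src tgt V E \<alpha> \<beta>"
    and "\<exists>\<phi>. is_fundamental_group k src tgt V E \<alpha> \<beta> G \<phi>"
    and "\<forall>v < k. \<exists>m::nat. V v \<cong> product_group {..<m} (\<lambda>_. integer_mod_group p)"
    and "\<forall>e < k - 1. \<alpha> e ` carrier (E e) \<noteq> carrier (V (src e)) \<and>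
                     \<beta> e ` carrier (E e) \<noteq> carrier (V (tgt e))"
    and "(\<Prod>v<k. real (card (carrier (V v)))) / (\<Prod>e<k - 1. real (card (carrier (E e)))) = real p ^ n"
    and "k \<ge> n"
  shows "k = n \<and> G \<cong> Cp_free_prod p n"
proof -
  note pr = assms(1) and Gg = assms(4) and gog = assms(8)
  have cnt: "k = n \<and> (\<forall>v<k. card (carrier (V v)) = p) \<and> (\<forall>e<k-1. card (carrier (E e)) = 1)"
    by (rule counting[OF assms(1,3,8,10,11,12,13)])
  have kn: "k = n" using cnt by blast
  have cV: "\<forall>v<k. card (carrier (V v)) = p" using cnt by blast
  have cE: "\<forall>e<k-1. card (carrier (E e)) = 1" using cnt by blast
  obtain \<phi> where fg: "is_fundamental_group k src tgt V E \<alpha> \<beta> G \<phi>" using assms(9) by blast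
  have p1: "1 < p" using pr prime_gt_1_nat by blast
  let ?P = "Cp_free_prod p n"
  have Pg: "group ?P" using P_group[OF p1] .
  have grpV: "\<forall>v<k. group (V v)" using gog unfolding graph_of_groups_def by blast
  have grpE: "\<forall>e<k-1. group (E e) \<and> \<alpha> e \<in> hom (E e) (V (src e)) \<and> inj_on (\<alpha> e) (carrier (E e)) \<and>
        \<beta> e \<in> hom (E e) (V (tgt e)) \<and> inj_on (\<beta> e) (carrier (E e))"
    using gog unfolding graph_of_groups_def by blast
  have ends: "\<forall>e < k - 1. src e < k \<and> tgt e < k \<and> src e \<noteq> tgt e"
    using gog unfolding graph_of_groups_def tree_graph_def by blast
  have cocphi: "cocone k src tgt V E \<alpha> \<beta> G \<phi>" using fg unfolding is_fundamental_group_def by blast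
  have phih: "\<forall>v<k. \<phi> v \<in> hom (V v) G" using cocphi unfolding cocone_def by blast
  have univ: "\<And>(T :: nat monoid) \<psi>. group T \<Longrightarrow> cocone k src tgt V E \<alpha> \<beta> T \<psi> \<Longrightarrow>
        (\<exists>f. f \<in> hom G T \<and> (\<forall>v < k. \<forall>x \<in> carrier (V v). f (\<phi> v x) = \<psi> v x)) \<and>
        (\<forall>f g. f \<in> hom G T \<and> (\<forall>v < k. \<forall>x \<in> carrier (V v). f (\<phi> v x) = \<psi> v x) \<and>
               g \<in> hom G T \<and> (\<forall>v < k. \<forall>x \<in> carrier (V v). g (\<phi> v x) = \<psi> v x) \<longrightarrow>
               (\<forall>y \<in> carrier G. f y = g y))"
    using fg unfolding is_fundamental_group_def by blast
  define Q where "Q v g \<rho> \<longleftrightarrow> g \<in> carrier (V v) \<and> g [^]\<^bsub>V v\<^esub> p = \<one>\<^bsub>V v\<^esub> \<and> \<rho> \<in> hom (V v) ?P \<and>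
     (\<forall>x\<in>carrier (V v). \<exists>a<p. x = g [^]\<^bsub>V v\<^esub> a \<and> \<rho> x = (if a = 0 then [] else [(v,a)])) \<and>
     (\<forall>a. 0 < a \<and> a < p \<longrightarrow> \<rho> (g [^]\<^bsub>V v\<^esub> a) = [(v,a)])" for v g \<rho>
  have exQ: "\<exists>g \<rho>. Q v g \<rho>" if vk: "v < k" for v
  proof -
    have "group (V v)" "card (carrier (V v)) = p" "v < n" using grpV cV vk kn by auto
    then show ?thesis unfolding Q_def by (rule cyc_rho[OF _ _ pr])
  qed
  define gg where "gg v = (SOME g. \<exists>\<rho>. Q v g \<rho>)" for v
  define rr where "rr v = (SOME \<rho>. Q v (gg v) \<rho>)" for v
  have Qv: "Q v (gg v) (rr v)" if vk: "v < k" for v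
  proof -
    have "\<exists>\<rho>. Q v (gg v) \<rho>" unfolding gg_def using someI_ex[OF exQ[OF vk]] .
    then show ?thesis unfolding rr_def by (rule someI_ex)
  qed
  have g_c: "gg v \<in> carrier (V v)" and g_p: "gg v [^]\<^bsub>V v\<^esub> p = \<one>\<^bsub>V v\<^esub>"
    and r_h: "rr v \<in> hom (V v) ?P"
    and r_x: "\<forall>x\<in>carrier (V v). \<exists>a<p. x = gg v [^]\<^bsub>V v\<^esub> a \<and> rr v x = (if a = 0 then [] else [(v,a)])"
    and r_g: "\<forall>a. 0 < a \<and> a < p \<longrightarrow> rr v (gg v [^]\<^bsub>V v\<^esub> a) = [(v,a)]"
    if vk: "v < k" for v
    using Qv[OF vk] unfolding Q_def by blast+
  define t where "t v = \<phi> v (gg v)" for v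
  have tprop: "\<forall>i<n. t i \<in> carrier G \<and> t i [^]\<^bsub>G\<^esub> p = \<one>\<^bsub>G\<^esub>"
  proof (intro allI impI)
    fix i assume "i < n"
    then have ik: "i < k" using kn by simp
    have gv: "group (V i)" using grpV ik by blast
    have "t i \<in> carrier G" unfolding t_def using phih ik g_c[OF ik] by (meson hom_in_carrier)
    moreover have "t i [^]\<^bsub>G\<^esub> p = \<phi> i (gg i [^]\<^bsub>V i\<^esub> p)"
      unfolding t_def using hom_nat_pow[OF _ g_c[OF ik] gv Gg] phih ik by simp
    moreover have "\<phi> i (\<one>\<^bsub>V i\<^esub>) = \<one>\<^bsub>G\<^esub>" using hom_one[OF _ gv Gg] phih ik by blast
    ultimately show "t i \<in> carrier G \<and> t i [^]\<^bsub>G\<^esub> p = \<one>\<^bsub>G\<^esub>" using g_p[OF ik] by simp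
  qed
  define H where "H = evalP G t"
  have Hh: "H \<in> hom ?P G" unfolding H_def by (rule evalP_hom[OF Gg tprop])
  have Hletter: "H [(i,a)] = \<phi> i (gg i [^]\<^bsub>V i\<^esub> a)" if ik: "i < k" for i a
  proof -
    have gv: "group (V i)" using grpV ik by blast
    have "H [(i,a)] = t i [^]\<^bsub>G\<^esub> a \<otimes>\<^bsub>G\<^esub> \<one>\<^bsub>G\<^esub>" by (simp add: H_def evalP_def)
    also have "\<dots> = t i [^]\<^bsub>G\<^esub> a"
    proof -
      have ti: "t i \<in> carrier G" using tprop ik kn by simp
      show ?thesis using monoid.r_one[OF group.is_monoid[OF Gg] monoid.nat_pow_closed[OF group.is_monoid[OF Gg] ti]] .
    qed
    also have "\<dots> = \<phi> i (gg i [^]\<^bsub>V i\<^esub> a)"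
      unfolding t_def using hom_nat_pow[OF _ g_c[OF ik] gv Gg] phih ik by simp
    finally show ?thesis .
  qed
  have H1: "H (rr v x) = \<phi> v x" if vk: "v < k" and x: "x \<in> carrier (V v)" for v x
  proof -
    have gv: "group (V v)" using grpV vk by blast
    obtain a where a: "a < p" "x = gg v [^]\<^bsub>V v\<^esub> a" "rr v x = (if a = 0 then [] else [(v,a)])"
      using r_x[OF vk] x by blast
    show ?thesis
    proof (cases "a = 0")
      case True
      then have "x = \<one>\<^bsub>V v\<^esub>" using a(2) by simp
      moreover have "\<phi> v (\<one>\<^bsub>V v\<^esub>) = \<one>\<^bsub>G\<^esub>" using hom_one[OF _ gv Gg] phih vk by blast
      moreover have "H [] = \<one>\<^bsub>G\<^esub>" by (simp add: H_def evalP_def)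
      ultimately show ?thesis using a(3) True by simp
    next
      case False
      then have "rr v x = [(v,a)]" using a(3) by simp
      then show ?thesis using Hletter[OF vk, of a] a(2) by simp
    qed
  qed
  define TP where "TP = transport ?P to_nat"
  have TPg: "group TP" and enc: "to_nat \<in> iso ?P TP"
    unfolding TP_def using transport_group[OF Pg inj_on_to_nat] by blast+
  have ench: "to_nat \<in> hom ?P TP" using enc unfolding iso_def by blast
  define \<psi> where "\<psi> v x = to_nat (rr v x)" for v x
  have cocpsi: "cocone k src tgt V E \<alpha> \<beta> TP \<psi>"
    unfolding cocone_def
  proof (intro conjI allI impI ballI)
    fix v assume "v < k"
    then show "\<psi> v \<in> hom (V v) TP" unfolding \<psi>_def using hom_comp'[OF r_h ench] by blast
  next
    fix e x assume ek: "e < k - 1" and x: "x \<in> carrier (E e)"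
    have ge: "group (E e)" and ha: "\<alpha> e \<in> hom (E e) (V (src e))" and hb: "\<beta> e \<in> hom (E e) (V (tgt e))"
      using grpE ek by blast+
    have sk: "src e < k" "tgt e < k" using ends ek by blast+
    have "\<one>\<^bsub>E e\<^esub> \<in> carrier (E e)" using ge by (simp add: group.is_monoid monoid.one_closed)
    then have "x = \<one>\<^bsub>E e\<^esub>" using x cE ek by (metis card_1_singletonE singletonD)
    moreover have "\<alpha> e (\<one>\<^bsub>E e\<^esub>) = \<one>\<^bsub>V (src e)\<^esub>" using hom_one[OF ha ge] grpV sk by blast
    moreover have "\<beta> e (\<one>\<^bsub>E e\<^esub>) = \<one>\<^bsub>V (tgt e)\<^esub>" using hom_one[OF hb ge] grpV sk by blast
    moreover have "rr (src e) (\<one>\<^bsub>V (src e)\<^esub>) = \<one>\<^bsub>?P\<^esub>" using hom_one[OF r_h[OF sk(1)] _ Pg] grpV sk by blast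
    moreover have "rr (tgt e) (\<one>\<^bsub>V (tgt e)\<^esub>) = \<one>\<^bsub>?P\<^esub>" using hom_one[OF r_h[OF sk(2)] _ Pg] grpV sk by blast
    ultimately show "\<psi> (src e) (\<alpha> e x) = \<psi> (tgt e) (\<beta> e x)" unfolding \<psi>_def by simp
  qed
  obtain K where Kh: "K \<in> hom G TP" and K1: "\<forall>v<k. \<forall>x\<in>carrier (V v). K (\<phi> v x) = to_nat (rr v x)"
    using univ[OF TPg cocpsi] unfolding \<psi>_def by blast
  have KH: "K (H w) = to_nat w" if "rw p n w" for w
    using that
  proof (induction w)
    case Nil
    have "H [] = \<one>\<^bsub>G\<^esub>" by (simp add: H_def evalP_def)
    moreover have "K \<one>\<^bsub>G\<^esub> = \<one>\<^bsub>TP\<^esub>" using hom_one[OF Kh Gg TPg] .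
    moreover have "\<one>\<^bsub>TP\<^esub> = to_nat ([] :: (nat \<times> nat) list)" by (simp add: TP_def transport_def one_P)
    ultimately show ?case by simp
  next
    case (Cons x w')
    obtain i a where x: "x = (i,a)" by force
    have w': "rw p n w'" using Cons.prems rw_tl by blast
    have v: "i < n" "0 < a" "a < p" using Cons.prems x by (cases w'; auto)+
    have ik: "i < k" using v kn by simp
    have cons: "(i,a) # w' = [(i,a)] \<otimes>\<^bsub>?P\<^esub> w'"
      using Cons.prems x by (cases w') (auto simp: mult_P)
    have c1: "[(i,a)] \<in> carrier ?P" using v by (simp add: carrier_P)
    have c2: "w' \<in> carrier ?P" using w' by (simp add: carrier_P)
    have "H ((i,a) # w') = H [(i,a)] \<otimes>\<^bsub>G\<^esub> H w'" unfolding cons using Hh c1 c2 by (simp add: hom_mult)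
    moreover have "H [(i,a)] \<in> carrier G" "H w' \<in> carrier G" using Hh c1 c2 by (auto simp: hom_in_carrier)
    ultimately have "K (H ((i,a) # w')) = K (H [(i,a)]) \<otimes>\<^bsub>TP\<^esub> K (H w')" using Kh by (simp add: hom_mult)
    also have "K (H [(i,a)]) = to_nat [(i,a)]"
    proof -
      have gc: "gg i [^]\<^bsub>V i\<^esub> a \<in> carrier (V i)" using g_c[OF ik] grpV ik
        by (simp add: group.is_monoid monoid.nat_pow_closed)
      have "K (H [(i,a)]) = K (\<phi> i (gg i [^]\<^bsub>V i\<^esub> a))" using Hletter[OF ik] by simp
      also have "\<dots> = to_nat (rr i (gg i [^]\<^bsub>V i\<^esub> a))" using K1 ik gc by blast
      also have "rr i (gg i [^]\<^bsub>V i\<^esub> a) = [(i,a)]" using r_g[OF ik] v by blast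
      finally show ?thesis .
    qed
    also have "K (H w') = to_nat w'" using Cons.IH[OF w'] .
    also have "to_nat [(i,a)] \<otimes>\<^bsub>TP\<^esub> to_nat w' = to_nat ([(i,a)] \<otimes>\<^bsub>?P\<^esub> w')"
      using ench c1 c2 by (simp add: hom_mult)
    finally show ?case using cons x by simp
  qed
  have "countable (carrier G)" by (rule fg_countable[OF Gg assms(5)])
  then obtain f :: "'a \<Rightarrow> nat" where finj: "inj_on f (carrier G)" by (rule countableE)
  define TG where "TG = transport G f"
  have TGg: "group TG" and fiso: "f \<in> iso G TG"
    unfolding TG_def using transport_group[OF Gg finj] by blast+
  have fh: "f \<in> hom G TG" using fiso unfolding iso_def by blast
  define \<psi>' where "\<psi>' v x = f (\<phi> v x)" for v x
  have cocpsi2: "cocone k src tgt V E \<alpha> \<beta> TG \<psi>'"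
    unfolding cocone_def
  proof (intro conjI allI impI ballI)
    fix v assume "v < k"
    then show "\<psi>' v \<in> hom (V v) TG" unfolding \<psi>'_def using hom_comp'[OF _ fh] phih by blast
  next
    fix e x assume "e < k - 1" "x \<in> carrier (E e)"
    then show "\<psi>' (src e) (\<alpha> e x) = \<psi>' (tgt e) (\<beta> e x)"
      using cocphi unfolding cocone_def \<psi>'_def by simp
  qed
  define D where "D y = inv_into (carrier ?P) to_nat (K y)" for y
  have KC: "K y \<in> carrier TP" if "y \<in> carrier G" for y using Kh that by (rule hom_in_carrier)
  have DC: "D y \<in> carrier ?P" "to_nat (D y) = K y" if "y \<in> carrier G" for y
    unfolding D_def using transport_inv[OF inj_on_to_nat KC[OF that, unfolded TP_def]] by blast+
  have Dh: "D \<in> hom G ?P"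
  proof (rule homI)
    fix y assume "y \<in> carrier G" then show "D y \<in> carrier ?P" by (rule DC)
  next
    fix x y assume xy: "x \<in> carrier G" "y \<in> carrier G"
    have "K (x \<otimes>\<^bsub>G\<^esub> y) = K x \<otimes>\<^bsub>TP\<^esub> K y" using Kh xy by (simp add: hom_mult)
    also have "\<dots> = to_nat (D x \<otimes>\<^bsub>?P\<^esub> D y)" by (simp add: TP_def transport_def D_def)
    finally have "D (x \<otimes>\<^bsub>G\<^esub> y) = inv_into (carrier ?P) to_nat (to_nat (D x \<otimes>\<^bsub>?P\<^esub> D y))"
      by (simp add: D_def)
    also have "\<dots> = D x \<otimes>\<^bsub>?P\<^esub> D y"
      using DC xy group.is_monoid[OF Pg] by (simp add: monoid.m_closed)
    finally show "D (x \<otimes>\<^bsub>G\<^esub> y) = D x \<otimes>\<^bsub>?P\<^esub> D y" .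
  qed
  define M where "M y = f (H (D y))" for y
  have Mh: "M \<in> hom G TG" unfolding M_def using hom_comp'[OF hom_comp'[OF Dh Hh] fh] .
  have M1: "\<forall>v<k. \<forall>x\<in>carrier (V v). M (\<phi> v x) = \<psi>' v x"
  proof (intro allI impI ballI)
    fix v x assume vk: "v < k" and x: "x \<in> carrier (V v)"
    have "D (\<phi> v x) = inv_into (carrier ?P) to_nat (to_nat (rr v x))" using K1 vk x by (simp add: D_def)
    also have "\<dots> = rr v x" using r_h[OF vk] x by (simp add: hom_in_carrier)
    finally show "M (\<phi> v x) = \<psi>' v x" using H1[OF vk x] by (simp add: M_def \<psi>'_def)
  qed
  have f1: "\<forall>v<k. \<forall>x\<in>carrier (V v). f (\<phi> v x) = \<psi>' v x" by (simp add: \<psi>'_def)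
  have fM: "\<forall>y\<in>carrier G. f y = M y"
    using conjunct2[OF univ[OF TGg cocpsi2]] fh f1 Mh M1 by blast
  have HD: "H (D y) = y" if "y \<in> carrier G" for y
  proof -
    have "H (D y) \<in> carrier G" using Hh DC(1)[OF that] by (rule hom_in_carrier)
    moreover have "f (H (D y)) = f y" using fM that by (simp add: M_def)
    ultimately show ?thesis using finj that by (meson inj_onD)
  qed
  have DH: "D (H w) = w" if "w \<in> carrier ?P" for w
  proof -
    have "D (H w) = inv_into (carrier ?P) to_nat (to_nat w)"
      using KH that by (simp add: D_def carrier_P)
    then show ?thesis using that by simp
  qed
  have "bij_betw D (carrier G) (carrier ?P)"
  proof (rule bij_betw_byWitness[of _ H])
    show "\<forall>a\<in>carrier G. H (D a) = a" using HD by blast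
    show "\<forall>a'\<in>carrier ?P. D (H a') = a'" using DH by blast
    show "D ` carrier G \<subseteq> carrier ?P" using DC by blast
    show "H ` carrier ?P \<subseteq> carrier G" using Hh by (auto simp: hom_in_carrier)
  qed
  then have "D \<in> iso G ?P" using Dh unfolding iso_def by blast
  then have "G \<cong> ?P" unfolding is_iso_def by blast
  then show ?thesis using kn by blast
qed


end
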